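(* Consider the following $n$-round process. In each round $i$, an adversary chooses a probability distribution $\mathcal{D}_i$ on $[0,1]$, possibly depending on the first $i-1$ rounds, and a sample $R_i\sim\mathcal{D}_i$ is drawn. Let $Z_1=1$ and $Z_{i+1}=Z_i-R_iZ_i$ for $i\ge1$, and let $Y=\sum_{i=1}^n Z_i\,\mathbb{E}[R_i]$, where $\mathbb{E}[R_i]$ denotes the mean of $\mathcal{D}_i$. Then for every real $q$ and every adversary strategy, $\Pr[Y>q]\le e\cdot\exp(-q)$. *)

theory Defs
  imports "HOL-Probability.Probability"
begin

text \<open>Histories of samples: sample of round i (0-indexed) is stored at coordinate i;
  coordinates of rounds not yet played are 0.\<close>
definition histM :: "(nat \<Rightarrow> real) measure" where
  "histM = PiM UNIV (\<lambda>_. borel)"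

definition trunc :: "nat \<Rightarrow> (nat \<Rightarrow> real) \<Rightarrow> (nat \<Rightarrow> real)" where
  "trunc i h = (\<lambda>j. if j < i then h j else 0)"

text \<open>An adversary strategy D: in round i (0-indexed), given the history h, it chooses
  the distribution D i h on the reals (required to be supported on [0,1]).
  proc D i is the joint distribution of the history after i rounds.\<close>
fun proc :: "(nat \<Rightarrow> (nat \<Rightarrow> real) \<Rightarrow> real measure) \<Rightarrow> nat \<Rightarrow> (nat \<Rightarrow> real) measure" where
  "proc D 0 = return histM (\<lambda>_. 0)"
| "proc D (Suc i) = bind (proc D i) (\<lambda>h. bind (D i (trunc i h)) (\<lambda>r. return histM (h(i := r))))"

text \<open>Z h 0 = 1 (Z_1 in the paper), Z h (i+1) = Z h i - R_i Z h i.\<close>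
fun Zseq :: "(nat \<Rightarrow> real) \<Rightarrow> nat \<Rightarrow> real" where
  "Zseq h 0 = 1"
| "Zseq h (Suc i) = Zseq h i - h i * Zseq h i"

definition meanR :: "(nat \<Rightarrow> (nat \<Rightarrow> real) \<Rightarrow> real measure) \<Rightarrow> nat \<Rightarrow> (nat \<Rightarrow> real) \<Rightarrow> real" where
  "meanR D i h = integral\<^sup>L (D i (trunc i h)) (\<lambda>x. x)"

definition Yval :: "(nat \<Rightarrow> (nat \<Rightarrow> real) \<Rightarrow> real measure) \<Rightarrow> nat \<Rightarrow> (nat \<Rightarrow> real) \<Rightarrow> real" where
  "Yval D n h = (\<Sum>i<n. Zseq h i * meanR D i h)"

end

theory Submission
  imports Defs
begin


definition Fpot :: "real \<Rightarrow> real \<Rightarrow> real \<Rightarrow> real" where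
 "Fpot q y z = (if q < y then 1 else if z \<le> 0 then 0 else min 1 (exp (1 - (q - y) / z)))"

definition Sv :: "real \<Rightarrow> real" where "Sv v = (if v \<le> 1 then 1/v else exp (1 - v))"

lemma Fpot_le1: "Fpot q y z \<le> 1" by (simp add: Fpot_def)
lemma Fpot_ge0: "0 \<le> Fpot q y z" by (simp add: Fpot_def)

lemma key_pw:
  assumes v: "0 < v" and w: "0 < w" "w \<le> 1"
  shows "min 1 (exp (1 - v / w)) \<le> Sv v * w"
proof (cases "v \<le> 1")
  case True
  show ?thesis
  proof (cases "v \<le> w")
    case True
    then have "1 \<le> w / v" using v by simp
    then show ?thesis using \<open>v \<le> 1\<close> by (simp add: Sv_def)
  next
    case False
    define t where "t = v / w"
    have t1: "t > 1" using False w v by (simp add: t_def)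
    have "t \<le> exp (t - 1)" using exp_ge_add_one_self[of "t - 1"] by simp
    then have "exp (1 - t) \<le> 1 / t" using t1
      by (simp add: exp_diff field_simps)
    also have "1 / t = w / v" using v w by (simp add: t_def)
    finally show ?thesis using \<open>v \<le> 1\<close> by (simp add: Sv_def t_def min_le_iff_disj)
  qed
next
  case False
  have l0: "ln (1 / w) \<le> 1 / w - 1" using w by (intro ln_le_minus_one) simp
  have "ln (1 / w) = - ln w" using w by (simp add: ln_div)
  then have l: "1 - 1 / w \<le> ln w" using l0 by linarith
  have "v * (1 - 1/w) \<le> 1 - 1/w"
    using mult_right_mono_neg[of 1 v "1 - 1/w"] False w by simp
  then have "v - v / w \<le> ln w" using l by (simp add: algebra_simps)
  then have "exp (v - v / w) \<le> exp (ln w)" by (simp only: exp_le_cancel_iff)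
  then have ew: "exp (v - v / w) \<le> w" using w by simp
  have "exp (1 - v / w) = exp (1 - v) * exp (v - v / w)" by (simp add: mult_exp_exp)
  also have "\<dots> \<le> exp (1 - v) * w" using ew by (intro mult_left_mono) auto
  finally have "exp (1 - v / w) \<le> exp (1 - v) * w" .
  then show ?thesis using False by (simp add: Sv_def min_le_iff_disj)
qed

lemma Sv_bound:
  assumes "0 \<le> m" "m < v"
  shows "Sv v * m \<le> exp (m - v)"
proof (cases "v \<le> 1")
  case True
  show ?thesis
  proof (cases "m = 0")
    case True then show ?thesis by simp
  next
    case False
    then have m: "0 < m" using assms by simp
    have v: "0 < v" using assms by simp
    have l0: "ln (m / v) \<le> m / v - 1" using m v by (intro ln_le_minus_one) simp
    have "ln (m / v) = - ln (v / m)" using m v by (simp add: ln_div)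
    then have L1: "1 - m / v \<le> ln (v / m)" using l0 by linarith
    have vm: "0 \<le> v - m" using assms by simp
    have "(v - m) * v \<le> (v - m) * 1" using True vm by (intro mult_left_mono) auto
    then have "v - m \<le> (v - m) / v" using v by (simp add: le_divide_eq)
    moreover have "(v - m) / v = 1 - m / v" using v by (simp add: diff_divide_distrib)
    ultimately have L2: "v - m \<le> 1 - m / v" by simp
    have "exp (v - m) \<le> exp (ln (v / m))" using L1 L2 by simp
    then have "exp (v - m) \<le> v / m" using m v by simp
    then have "m * exp (v - m) \<le> v" using m by (simp add: field_simps)
    then have "m / v \<le> exp (m - v)" using v m
      by (simp add: exp_diff field_simps)
    then show ?thesis using True by (simp add: Sv_def)
  qed
next
  case False
  have "m \<le> exp (m - 1)" using exp_ge_add_one_self[of "m - 1"] by simp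
  then have "exp (1 - v) * m \<le> exp (1 - v) * exp (m - 1)" by simp
  also have "\<dots> = exp (m - v)" by (simp add: mult_exp_exp)
  finally show ?thesis using False by (simp add: Sv_def)
qed

lemma step_lemma:
  fixes P :: "real measure"
  assumes P: "prob_space P" "sets P = sets borel" and ae: "AE x in P. 0 \<le> x \<and> x \<le> 1"
    and z: "0 \<le> z" "z \<le> 1"
  shows "(\<integral>\<^sup>+ r. ennreal (Fpot q (y + z * (\<integral>x. x \<partial>P)) (z - r * z)) \<partial>P) \<le> ennreal (Fpot q y z)"
proof -
  interpret prob_space P by fact
  have meas[measurable]: "(\<lambda>x. x) \<in> borel_measurable P" using P(2) by (rule measurable_ident_sets)
  have le1: "(\<integral>\<^sup>+ r. ennreal (Fpot q a b) \<partial>P) \<le> 1" for a b :: real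
  proof -
    have "(\<integral>\<^sup>+ r. ennreal (Fpot q a b) \<partial>P) \<le> (\<integral>\<^sup>+ r. 1 \<partial>P)"
      by (intro nn_integral_mono) (simp add: Fpot_le1)
    also have "\<dots> = 1" by (simp add: emeasure_space_1)
    finally show ?thesis .
  qed
  have le1': "(\<integral>\<^sup>+ r. ennreal (Fpot q (f r) (g r)) \<partial>P) \<le> 1" for f g
  proof -
    have "(\<integral>\<^sup>+ r. ennreal (Fpot q (f r) (g r)) \<partial>P) \<le> (\<integral>\<^sup>+ r. 1 \<partial>P)"
      by (intro nn_integral_mono) (simp add: Fpot_le1)
    also have "\<dots> = 1" by (simp add: emeasure_space_1)
    finally show ?thesis .
  qed
  define \<mu> where "\<mu> = (\<integral>x. x \<partial>P)"
  have int: "integrable P (\<lambda>x. x)"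
    by (rule integrable_const_bound[where B=1]) (use ae in auto)
  have mu0: "0 \<le> \<mu>" unfolding \<mu>_def by (rule integral_nonneg_AE) (use ae in auto)
  have mu1: "\<mu> \<le> 1"
  proof -
    have "\<mu> \<le> (\<integral>x. 1 \<partial>P)" unfolding \<mu>_def
      by (rule integral_mono_AE) (use ae int in auto)
    then show ?thesis by (simp add: prob_space)
  qed
  show ?thesis
  proof (cases "q < y")
    case True
    then show ?thesis using le1' by (simp add: Fpot_def)
  next
    case qy: False
    show ?thesis
    proof (cases "z \<le> 0")
      case True
      then have "z = 0" using z by simp
      then show ?thesis using qy by (simp add: Fpot_def)
    next
      case zp: False
      define u where "u = (q - y) / z"
      show ?thesis
      proof (cases "u \<le> 1")
        case True
        then have "Fpot q y z = 1" using qy zp by (simp add: Fpot_def u_def)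
        then show ?thesis using le1'[of "\<lambda>_. y + z * \<mu>" "\<lambda>r. z - r * z"] by (simp add: \<mu>_def)
      next
        case u1: False
        define v where "v = u - \<mu>"
        have v0: "0 < v" using u1 mu1 by (simp add: v_def)
        have qyz: "q - y = z * u" using zp by (simp add: u_def)
        have pw: "ennreal (Fpot q (y + z * \<mu>) (z - r * z)) \<le> ennreal (Sv v * (1 - r))"
          if r: "0 \<le> r" "r \<le> 1" for r
        proof (cases "r = 1")
          case True
          have "z * \<mu> < z * u" using zp v0 by (intro mult_strict_left_mono) (auto simp: v_def)
          then have "\<not> q < y + z * \<mu>" using qyz by linarith
          then show ?thesis using True by (simp add: Fpot_def)
        next
          case False
          then have w: "0 < 1 - r" using r by simp
          have "z * \<mu> < z * u" using zp v0 by (intro mult_strict_left_mono) (auto simp: v_def)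
          then have a: "\<not> q < y + z * \<mu>" using qyz by linarith
          have "0 < z * (1 - r)" using w zp by simp
          then have b: "\<not> z - r * z \<le> 0" by (simp add: algebra_simps)
          have c: "(q - (y + z * \<mu>)) / (z - r * z) = v / (1 - r)"
            using zp w qyz by (simp add: v_def field_simps)
          have "Fpot q (y + z * \<mu>) (z - r * z) = min 1 (exp (1 - v / (1 - r)))"
            using a b c by (simp add: Fpot_def)
          also have "\<dots> \<le> Sv v * (1 - r)" by (rule key_pw) (use v0 w r in auto)
          finally show ?thesis by (simp add: ennreal_leI)
        qed
        have "(\<integral>\<^sup>+ r. ennreal (Fpot q (y + z * \<mu>) (z - r * z)) \<partial>P)
              \<le> (\<integral>\<^sup>+ r. ennreal (Sv v * (1 - r)) \<partial>P)"
          by (rule nn_integral_mono_AE) (use ae pw in auto)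
        also have "\<dots> = ennreal (\<integral>r. Sv v * (1 - r) \<partial>P)"
        proof (rule nn_integral_eq_integral)
          show "integrable P (\<lambda>r. Sv v * (1 - r))" using int by simp
          have "Sv v \<ge> 0" by (simp add: Sv_def) (use v0 in simp)
          then show "AE r in P. 0 \<le> Sv v * (1 - r)" using ae by auto
        qed
        also have "(\<integral>r. Sv v * (1 - r) \<partial>P) = Sv v * (1 - \<mu>)"
          using int by (simp add: \<mu>_def prob_space)
        also have "Sv v * (1 - \<mu>) \<le> exp ((1 - \<mu>) - v)"
          by (rule Sv_bound) (use mu1 u1 in \<open>auto simp: v_def\<close>)
        also have "(1 - \<mu>) - v = 1 - u" by (simp add: v_def)
        also have "exp (1 - u) = Fpot q y z" using qy zp u1
          by (simp add: Fpot_def u_def)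
        finally show ?thesis unfolding \<mu>_def using ennreal_leI by blast
      qed
    qed
  qed
qed



lemma space_histM[simp]: "space histM = UNIV"
  by (simp add: histM_def space_PiM)

lemma trunc_meas[measurable]: "trunc i \<in> histM \<rightarrow>\<^sub>M histM"
  unfolding histM_def trunc_def by (rule measurable_PiM_single') auto

lemma Zseq_meas[measurable]: "(\<lambda>h. Zseq h i) \<in> borel_measurable histM"
  by (induction i) (simp_all add: histM_def)

lemma Zseq_upd: "i \<le> k \<Longrightarrow> Zseq (h(k := r)) i = Zseq h i"
  by (induction i) auto

lemma trunc_upd: "i \<le> k \<Longrightarrow> trunc i (h(k := r)) = trunc i h"
  by (auto simp: trunc_def)

lemma meanR_upd: "i \<le> k \<Longrightarrow> meanR D i (h(k := r)) = meanR D i h"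
  by (simp add: meanR_def trunc_upd)

lemma Yval_upd: "Yval D (Suc k) (h(k := r)) = Yval D k h + Zseq h k * meanR D k h"
  by (simp add: Yval_def Zseq_upd meanR_upd)

lemma Zseq_bounds: "(\<forall>i\<in>{..<k}. 0 \<le> h i \<and> h i \<le> 1) \<Longrightarrow> 0 \<le> Zseq h k \<and> Zseq h k \<le> 1"
proof (induction k)
  case 0 then show ?case by simp
next
  case (Suc k)
  then have z: "0 \<le> Zseq h k" "Zseq h k \<le> 1" and r: "0 \<le> h k" "h k \<le> 1" by auto
  have "Zseq h (Suc k) = Zseq h k * (1 - h k)" by (simp add: algebra_simps)
  moreover have "0 \<le> Zseq h k * (1 - h k)" using z r by simp
  moreover have "Zseq h k * (1 - h k) \<le> 1 * 1" using z r by (intro mult_mono) auto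
  ultimately show ?case by simp
qed

definition Pot :: "(nat \<Rightarrow> (nat \<Rightarrow> real) \<Rightarrow> real measure) \<Rightarrow> real \<Rightarrow> nat \<Rightarrow> (nat \<Rightarrow> real) \<Rightarrow> ennreal" where
  "Pot D q k h = (if \<forall>i\<in>{..<k}. 0 \<le> h i \<and> h i \<le> 1 then ennreal (Fpot q (Yval D k h) (Zseq h k)) else \<infinity>)"

context
  fixes D :: "nat \<Rightarrow> (nat \<Rightarrow> real) \<Rightarrow> real measure" and n :: nat and q :: real
  assumes kernel: "\<And>i. i < n \<Longrightarrow> D i \<in> histM \<rightarrow>\<^sub>M prob_algebra borel"
    and supp: "\<And>i h. i < n \<Longrightarrow> h \<in> space histM \<Longrightarrow> AE x in D i h. 0 \<le> x \<and> x \<le> 1"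
begin

lemma Dt_meas: "i < n \<Longrightarrow> (\<lambda>h. D i (trunc i h)) \<in> histM \<rightarrow>\<^sub>M subprob_algebra borel"
  using measurable_compose[OF trunc_meas measurable_prob_algebraD[OF kernel]] by simp

lemma Dt_prob: "i < n \<Longrightarrow> prob_space (D i h) \<and> sets (D i h) = sets borel"
  using measurable_space[OF kernel, of i h] by (simp add: space_prob_algebra)

lemma meanR_meas: "i < n \<Longrightarrow> (\<lambda>h. meanR D i h) \<in> borel_measurable histM"
  unfolding meanR_def
  by (rule measurable_compose[OF Dt_meas integral_measurable_subprob_algebra]) (auto intro: measurable_ident_sets)

lemma Yval_meas: "k \<le> n \<Longrightarrow> (\<lambda>h. Yval D k h) \<in> borel_measurable histM"
  unfolding Yval_def
  by (intro borel_measurable_sum borel_measurable_times Zseq_meas meanR_meas) auto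

lemma Fpot_meas[measurable]:
  assumes [measurable]: "f \<in> borel_measurable M" "g \<in> borel_measurable M"
  shows "(\<lambda>x. Fpot q (f x) (g x)) \<in> borel_measurable M"
  unfolding Fpot_def by measurable

lemma Pot_meas: "k \<le> n \<Longrightarrow> Pot D q k \<in> borel_measurable histM"
proof -
  assume k: "k \<le> n"
  note [measurable] = Yval_meas[OF k]
  have [measurable]: "(\<lambda>h. h i) \<in> borel_measurable histM" for i
    unfolding histM_def by measurable
  show ?thesis unfolding Pot_def by measurable
qed

definition K :: "nat \<Rightarrow> (nat \<Rightarrow> real) \<Rightarrow> (nat \<Rightarrow> real) measure" where
  "K k h = bind (D k (trunc k h)) (\<lambda>r. return histM (h(k := r)))"

lemma upd_meas: "(\<lambda>(h, r). h(k := r)) \<in> histM \<Otimes>\<^sub>M borel \<rightarrow>\<^sub>M histM"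
  using measurable_add_dim[of k UNIV "\<lambda>_. borel"] by (simp add: histM_def insert_UNIV)

lemma upd_meas2: "(\<lambda>r. h(k := r)) \<in> borel \<rightarrow>\<^sub>M histM"
  unfolding histM_def by (rule measurable_fun_upd[where J=UNIV]) (auto simp: space_PiM)

lemma K_meas: "k < n \<Longrightarrow> K k \<in> histM \<rightarrow>\<^sub>M subprob_algebra histM"
  unfolding K_def
proof (rule measurable_bind'[OF Dt_meas])
  have "(\<lambda>x. return histM (case x of (h, r) \<Rightarrow> h(k := r))) \<in> histM \<Otimes>\<^sub>M borel \<rightarrow>\<^sub>M subprob_algebra histM"
    by (rule measurable_compose[OF upd_meas return_measurable])
  then show "(\<lambda>(h, r). return histM (h(k := r))) \<in> histM \<Otimes>\<^sub>M borel \<rightarrow>\<^sub>M subprob_algebra histM"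
    by (simp add: case_prod_unfold)
qed

lemma sets_K: "k < n \<Longrightarrow> sets (K k h) = sets histM"
  unfolding K_def using Dt_prob[of k "trunc k h"]
  by (subst sets_bind[where N=histM]) (auto simp: prob_space.not_empty sets_eq_imp_space_eq)

lemma proc_Suc: "proc D (Suc k) = bind (proc D k) (K k)"
  by (simp add: K_def[abs_def])

lemma sets_proc: "k \<le> n \<Longrightarrow> sets (proc D k) = sets histM"
proof (induction k)
  case 0 then show ?case by simp
next
  case (Suc k)
  then have s: "sets (proc D k) = sets histM" by simp
  have "space (proc D k) \<noteq> {}" using sets_eq_imp_space_eq[OF s] by simp
  then show ?case unfolding proc_Suc using sets_K Suc.prems
    by (subst sets_bind[where N=histM]) auto
qed

lemma inner_step:
  assumes k: "k < n"
  shows "(\<integral>\<^sup>+ h'. Pot D q (Suc k) h' \<partial>K k h) \<le> Pot D q k h"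
proof (cases "\<forall>i\<in>{..<k}. 0 \<le> h i \<and> h i \<le> 1")
  case False
  then have "Pot D q k h = \<infinity>" unfolding Pot_def by argo
  then show ?thesis by simp
next
  case good: True
  have P: "prob_space (D k (trunc k h))" "sets (D k (trunc k h)) = sets borel"
    using Dt_prob[OF k] by auto
  have ae: "AE x in D k (trunc k h). 0 \<le> x \<and> x \<le> 1" using supp[OF k] by simp
  have ret: "(\<lambda>r. return histM (h(k := r))) \<in> D k (trunc k h) \<rightarrow>\<^sub>M subprob_algebra histM"
    using measurable_compose[OF upd_meas2 return_measurable] measurable_cong_sets[OF P(2) refl, of "subprob_algebra histM"] by simp
  have "(\<integral>\<^sup>+ h'. Pot D q (Suc k) h' \<partial>K k h)
      = (\<integral>\<^sup>+ r. \<integral>\<^sup>+ h'. Pot D q (Suc k) h' \<partial>return histM (h(k := r)) \<partial>D k (trunc k h))"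
    unfolding K_def by (rule nn_integral_bind[OF Pot_meas ret]) (use k in simp)
  also have "\<dots> = (\<integral>\<^sup>+ r. Pot D q (Suc k) (h(k := r)) \<partial>D k (trunc k h))"
    by (intro nn_integral_cong nn_integral_return) (auto intro: Pot_meas simp: k Suc_leI)
  also have "\<dots> = (\<integral>\<^sup>+ r. ennreal (Fpot q (Yval D k h + Zseq h k * (\<integral>x. x \<partial>D k (trunc k h)))
                         (Zseq h k - r * Zseq h k)) \<partial>D k (trunc k h))"
  proof (rule nn_integral_cong_AE)
    show "AE r in D k (trunc k h). Pot D q (Suc k) (h(k := r)) = ennreal (Fpot q (Yval D k h + Zseq h k * (\<integral>x. x \<partial>D k (trunc k h)))
                         (Zseq h k - r * Zseq h k))"
      using ae
    proof eventually_elim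
      case (elim r)
      have "\<forall>i\<in>{..<Suc k}. 0 \<le> (h(k := r)) i \<and> (h(k := r)) i \<le> 1" using good elim by auto
      then show ?case by (simp add: Pot_def Yval_upd Zseq_upd meanR_def)
    qed
  qed
  also have "\<dots> \<le> ennreal (Fpot q (Yval D k h) (Zseq h k))"
    using Zseq_bounds[OF good] ae P by (intro step_lemma) auto
  also have "\<dots> = Pot D q k h" using good by (simp add: Pot_def)
  finally show ?thesis .
qed

lemma outer_step:
  assumes k: "k < n"
  shows "(\<integral>\<^sup>+ h. Pot D q (Suc k) h \<partial>proc D (Suc k)) \<le> (\<integral>\<^sup>+ h. Pot D q k h \<partial>proc D k)"
proof -
  have Km: "K k \<in> proc D k \<rightarrow>\<^sub>M subprob_algebra histM"
    using K_meas[OF k] measurable_cong_sets[OF sets_proc refl, of k "subprob_algebra histM"] k by simp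
  have "(\<integral>\<^sup>+ h. Pot D q (Suc k) h \<partial>proc D (Suc k)) = (\<integral>\<^sup>+ h. \<integral>\<^sup>+ h'. Pot D q (Suc k) h' \<partial>K k h \<partial>proc D k)"
    unfolding proc_Suc by (rule nn_integral_bind[OF Pot_meas Km]) (use k in simp)
  also have "\<dots> \<le> (\<integral>\<^sup>+ h. Pot D q k h \<partial>proc D k)"
    by (intro nn_integral_mono inner_step k)
  finally show ?thesis .
qed

lemma all_steps: "k \<le> n \<Longrightarrow> (\<integral>\<^sup>+ h. Pot D q k h \<partial>proc D k) \<le> ennreal (exp 1 * exp (- q))"
proof (induction k)
  case 0
  have "(\<integral>\<^sup>+ h. Pot D q 0 h \<partial>proc D 0) = Pot D q 0 (\<lambda>_. 0)"
    by (simp add: nn_integral_return Pot_meas)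
  also have "\<dots> = ennreal (Fpot q 0 1)" by (simp add: Pot_def Yval_def)
  also have "\<dots> \<le> ennreal (exp 1 * exp (- q))"
  proof (rule ennreal_leI)
    have e: "exp 1 * exp (- q) = exp (1 - q)" by (simp add: mult_exp_exp)
    show "Fpot q 0 1 \<le> exp 1 * exp (- q)"
    proof (cases "q < 0")
      case True
      then have "1 \<le> exp (1 - q)" by simp
      then show ?thesis using True e by (simp add: Fpot_def)
    next
      case False
      then show ?thesis using e by (simp add: Fpot_def)
    qed
  qed
  finally show ?case .
next
  case (Suc k)
  then show ?case using outer_step[of k] by (meson Suc_leD Suc_le_lessD order_trans)
qed

theorem final:
  "measure (proc D n) {h \<in> space (proc D n). Yval D n h > q} \<le> exp 1 * exp (- q)"
proof (cases "{h \<in> space (proc D n). Yval D n h > q} \<in> sets (proc D n)")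
  case False
  then show ?thesis by (simp add: measure_notin_sets)
next
  case True
  define A where "A = {h \<in> space (proc D n). Yval D n h > q}"
  have "emeasure (proc D n) A = (\<integral>\<^sup>+ h. indicator A h \<partial>proc D n)"
    using True by (simp add: A_def)
  also have "\<dots> \<le> (\<integral>\<^sup>+ h. Pot D q n h \<partial>proc D n)"
    by (intro nn_integral_mono) (auto simp: A_def Pot_def Fpot_def indicator_def)
  also have "\<dots> \<le> ennreal (exp 1 * exp (- q))" by (rule all_steps) simp
  finally have le: "emeasure (proc D n) A \<le> ennreal (exp 1 * exp (- q))" .
  then have "emeasure (proc D n) A < \<infinity>" using le_less_trans by fastforce
  then have "emeasure (proc D n) A = ennreal (measure (proc D n) A)"
    by (simp add: emeasure_eq_ennreal_measure)
  with le have "ennreal (measure (proc D n) A) \<le> ennreal (exp 1 * exp (- q))" by simp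
  then show ?thesis unfolding A_def[symmetric] by (simp add: ennreal_le_iff)
qed

end

theorem mainTheorem15:
  fixes D :: "nat \<Rightarrow> (nat \<Rightarrow> real) \<Rightarrow> real measure"
    and n :: nat and q :: real
  assumes kernel: "\<And>i. i < n \<Longrightarrow> D i \<in> histM \<rightarrow>\<^sub>M prob_algebra borel"
    and supp: "\<And>i h. i < n \<Longrightarrow> h \<in> space histM \<Longrightarrow> AE x in D i h. 0 \<le> x \<and> x \<le> 1"
  shows "measure (proc D n) {h \<in> space (proc D n). Yval D n h > q} \<le> exp 1 * exp (- q)"
  by (rule final[OF kernel supp])

end
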